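(* Fix $\alpha>0$ and $N\ge1$. For $u\in\mathbb{R}$ and $D>0$ define $$\tilde H(u,D)=\int_{\mathbb{R}^N}(v_1-u)\exp\left(-\frac{|v|^2}{2D}+\frac{u v_1}{D}\right)\exp\left(-\alpha\left(\frac{|v|^4}{4D}-\frac{|v|^2}{2D}\right)\right)dv,$$ where $v=(v_1,\dots,v_N)$. There exists $D_0>0$ such that $\frac{\partial \tilde H}{\partial u}(u,D)<0$ for all $u>0$ and all $D\ge D_0$. *)

theory Defs
  imports "HOL-Analysis.Analysis"
begin

text \<open>The function H-tilde(u,D) of the paper, on R^N = real^'n (N = CARD('n)).
  The index i plays the role of the first coordinate v_1.  The integral is the
  Lebesgue integral over R^N.\<close>
definition Htilde :: "real \<Rightarrow> 'n::finite \<Rightarrow> real \<Rightarrow> real \<Rightarrow> real" where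
  "Htilde \<alpha> i u D =
     (LINT v|(lborel :: (real^'n) measure).
        (v $ i - u) * exp (- (norm v ^ 2) / (2 * D) + u * (v $ i) / D)
          * exp (- \<alpha> * (norm v ^ 4 / (4 * D) - norm v ^ 2 / (2 * D))))"

end

theory Submission
  imports Defs "HOL-Probability.Distributions"
begin


lemma int_gauss1: "integrable lborel (\<lambda>x::real. exp (- x\<^sup>2 / 2))"
proof -
  have "integrable lborel (\<lambda>x. sqrt (2*pi) * normal_density 0 1 x)"
    by (intro integrable_mult_right integrable_normal_density) simp
  moreover have "(\<lambda>x. sqrt (2*pi) * normal_density 0 1 x) = (\<lambda>x::real. exp (- x\<^sup>2 / 2))"
    by (auto simp: normal_density_def)
  ultimately show ?thesis by simp
qed

lemma norm_sq_basis: "(norm (x::'a::euclidean_space))\<^sup>2 = (\<Sum>b\<in>Basis. (x \<bullet> b)\<^sup>2)"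
  unfolding power2_norm_eq_inner by (subst euclidean_inner) (simp add: power2_eq_square)

lemma gauss_int: "integrable (lborel::('a::euclidean_space) measure) (\<lambda>v. exp(-(norm v)\<^sup>2/2))"
proof -
  have eq: "(\<lambda>v::'a. exp(-(norm v)\<^sup>2/2)) = (\<lambda>v. \<Prod>b\<in>Basis. exp (- (v \<bullet> b)\<^sup>2 / 2))"
    by (auto simp: norm_sq_basis exp_sum[symmetric] sum_divide_distrib sum_negf)
  have "(\<integral>\<^sup>+x. ennreal (norm (\<Prod>b\<in>Basis. exp (- (x \<bullet> b)\<^sup>2 / 2))) \<partial>(lborel::'a measure))
      = (\<integral>\<^sup>+x. (\<Prod>b\<in>Basis. (\<lambda>b t. ennreal (exp (- t\<^sup>2 / 2))) b (x \<bullet> b)) \<partial>(lborel::'a measure))"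
    by (rule nn_integral_cong, simp add: prod_ennreal prod_pos abs_of_pos)
  also have "\<dots> = (\<Prod>b\<in>(Basis::'a set). (\<integral>\<^sup>+t. ennreal (exp (- t\<^sup>2 / 2)) \<partial>lborel))"
    by (rule nn_integral_lborel_prod) auto
  also have "\<dots> < \<infinity>"
  proof -
    have "(\<integral>\<^sup>+t. ennreal (exp (- t\<^sup>2 / 2)) \<partial>lborel) < \<infinity>"
      using int_gauss1 unfolding integrable_iff_bounded by simp
    then show ?thesis by (simp add: power_less_top_ennreal)
  qed
  finally show ?thesis unfolding eq integrable_iff_bounded by simp
qed




lemma dq_bound:
  fixes F F' :: "real \<Rightarrow> 'a \<Rightarrow> real"
  assumes der: "\<And>t. \<bar>t - x0\<bar> < r \<Longrightarrow> ((\<lambda>s. F s v) has_real_derivative F' t v) (at t)"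
    and bnd: "\<And>t. \<bar>t - x0\<bar> < r \<Longrightarrow> \<bar>F' t v\<bar> \<le> g v"
    and h: "h \<noteq> 0" "\<bar>h\<bar> < r"
  shows "\<bar>(F (x0 + h) v - F x0 v) / h\<bar> \<le> g v"
proof (cases "h > 0")
  case True
  have "\<exists>z. x0 < z \<and> z < x0 + h \<and> F (x0+h) v - F x0 v = (x0 + h - x0) * F' z v"
    by (rule MVT2[where f="\<lambda>s. F s v"]) (use True h in \<open>auto intro!: der\<close>)
  then obtain z where z: "x0 < z" "z < x0 + h" "F (x0+h) v - F x0 v = h * F' z v" by auto
  then show ?thesis using bnd[of z] h by (simp add: abs_mult)
next
  case False
  then have hn: "h < 0" using h by auto
  have "\<exists>z. x0 + h < z \<and> z < x0 \<and> F x0 v - F (x0+h) v = (x0 - (x0 + h)) * F' z v"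
    by (rule MVT2[where f="\<lambda>s. F s v"]) (use hn h in \<open>auto intro!: der\<close>)
  then obtain z where z: "x0 + h < z" "z < x0" "F x0 v - F (x0+h) v = - h * F' z v" by auto
  then have "(F (x0 + h) v - F x0 v) / h = F' z v" using h by (auto simp: field_simps)
  then show ?thesis using bnd[of z] h z by auto
qed

lemma deriv_integral:
  fixes F F' :: "real \<Rightarrow> 'a \<Rightarrow> real" and g :: "'a \<Rightarrow> real"
  assumes r: "r > 0"
  and meas: "\<And>t. F t \<in> borel_measurable M"
  and meas': "F' x0 \<in> borel_measurable M"
  and intF: "integrable M (F x0)"
  and intg: "integrable M g"
  and der: "\<And>t v. \<bar>t - x0\<bar> < r \<Longrightarrow> ((\<lambda>s. F s v) has_real_derivative F' t v) (at t)"
  and bnd: "\<And>t v. \<bar>t - x0\<bar> < r \<Longrightarrow> \<bar>F' t v\<bar> \<le> g v"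
  shows "((\<lambda>t. \<integral>v. F t v \<partial>M) has_real_derivative (\<integral>v. F' x0 v \<partial>M)) (at x0)"
proof -
  define DQ where "DQ h v = (F (x0 + h) v - F x0 v) / h" for h v
  have dqb: "\<bar>DQ h v\<bar> \<le> g v" if "h \<noteq> 0" "\<bar>h\<bar> < r" for h v
    unfolding DQ_def by (rule dq_bound[where r=r and F'=F']) (use der bnd that in auto)
  have dqm: "DQ h \<in> borel_measurable M" for h
    unfolding DQ_def[abs_def] using meas by measurable
  have dqi: "integrable M (DQ h)" if "h \<noteq> 0" "\<bar>h\<bar> < r" for h
    by (rule Bochner_Integration.integrable_bound[OF intg dqm]) (use dqb[OF that] in \<open>auto intro!: AE_I2 order_trans[OF _ abs_ge_self]\<close>)
  have eqint: "((\<integral>v. F (x0 + h) v \<partial>M) - (\<integral>v. F x0 v \<partial>M)) / h = (\<integral>v. DQ h v \<partial>M)"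
    if "h \<noteq> 0" "\<bar>h\<bar> < r" for h
  proof -
    have e: "F (x0 + h) v = F x0 v + h * DQ h v" for v using that by (simp add: DQ_def)
    have "(\<integral>v. F (x0 + h) v \<partial>M) = (\<integral>v. F x0 v \<partial>M) + h * (\<integral>v. DQ h v \<partial>M)"
      unfolding e using intF dqi[OF that] by simp
    then show ?thesis using that by simp
  qed
  have lim: "((\<lambda>h. \<integral>v. DQ h v \<partial>M) \<longlongrightarrow> (\<integral>v. F' x0 v \<partial>M)) (at 0)"
    unfolding tendsto_at_iff_sequentially
  proof (intro allI impI)
    fix X :: "nat \<Rightarrow> real" assume X0: "\<forall>i. X i \<in> UNIV - {0}" and X: "X \<longlonglongrightarrow> 0"
    obtain N where N: "\<And>n. n \<ge> N \<Longrightarrow> \<bar>X n\<bar> < r"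
      using X r unfolding lim_sequentially by (auto simp: dist_real_def)
    have pl: "(\<lambda>n. DQ (X n) v) \<longlonglongrightarrow> F' x0 v" for v
    proof -
      have "((\<lambda>h. DQ h v) \<longlongrightarrow> F' x0 v) (at 0)"
        using der[of x0 v] r unfolding DERIV_def DQ_def by simp
      then show ?thesis unfolding tendsto_at_iff_sequentially comp_def using X0 X by blast
    qed
    have "(\<lambda>n. \<integral>v. DQ (X (n + N)) v \<partial>M) \<longlonglongrightarrow> (\<integral>v. F' x0 v \<partial>M)"
    proof (rule integral_dominated_convergence[where w=g])
      show "AE v in M. (\<lambda>n. DQ (X (n + N)) v) \<longlonglongrightarrow> F' x0 v"
        using pl by (auto intro!: AE_I2 LIMSEQ_ignore_initial_segment)
      show "AE v in M. norm (DQ (X (n + N)) v) \<le> g v" for n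
        using dqb[of "X (n+N)"] X0 N[of "n+N"] by (auto intro!: AE_I2)
    qed (use meas' dqm intg in auto)
    then show "((\<lambda>h. \<integral>v. DQ h v \<partial>M) \<circ> X) \<longlonglongrightarrow> (\<integral>v. F' x0 v \<partial>M)"
      unfolding comp_def by (rule LIMSEQ_offset)
  qed
  have ev: "\<forall>\<^sub>F h in at 0. (\<integral>v. DQ h v \<partial>M) = ((\<integral>v. F (x0 + h) v \<partial>M) - (\<integral>v. F x0 v \<partial>M)) / h"
    unfolding eventually_at using r by (intro exI[of _ r]) (auto simp: eqint dist_real_def)
  show ?thesis unfolding DERIV_def using tendsto_cong[OF ev] lim by simp
qed




lemma integral_translate:
  fixes f :: "'a::euclidean_space \<Rightarrow> real"
  assumes "f \<in> borel_measurable borel"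
  shows "(\<integral>x. f (c + x) \<partial>lborel) = (\<integral>x. f x \<partial>lborel)"
proof -
  have "(\<integral>x. f x \<partial>lborel) = (\<integral>x. f x \<partial>distr lborel borel ((+) c))"
    by (simp add: lborel_distr_plus)
  also have "\<dots> = (\<integral>x. f (c + x) \<partial>lborel)"
    by (rule integral_distr) (use assms in auto)
  finally show ?thesis by simp
qed

lemma poly_bound:
  fixes a b c r :: real
  assumes "a > 0"
  shows "c * r + b * r ^ 2 - a * r ^ 4 \<le> c ^ 2/4 + (b+1) ^ 2/(4 * a)"
proof -
  have 1: "c * r \<le> c ^ 2/4 + r ^ 2"
  proof -
    have "0 \<le> (r - c/2) ^ 2" by simp
    then show ?thesis by (simp add: power2_eq_square algebra_simps)
  qed
  have "4 * a * ((b+1) * r ^ 2 - a * r ^ 4) \<le> (b+1) ^ 2"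
  proof -
    have "0 \<le> (2 * a * r ^ 2 - (b+1)) ^ 2" by simp
    then show ?thesis by (simp add: power2_eq_square power4_eq_xxxx algebra_simps)
  qed
  then have 2: "(b+1) * r ^ 2 - a * r ^ 4 \<le> (b+1) ^ 2/(4 * a)"
    using assms by (simp add: field_simps)
  show ?thesis using 1 2 by (simp add: algebra_simps)
qed

definition Ps :: "real \<Rightarrow> real \<Rightarrow> real \<Rightarrow> real \<Rightarrow> real" where
  "Ps al u a n2 = -n2/2 + u * a - al * (n2 ^ 2/4 - n2/2)"

lemma MB:
  fixes i :: "'n::finite"
  assumes al: "al > 0" and D: "D > 0" and U: "U \<ge> 0"
  shows "\<exists>C>0. \<forall>(v::real^'n) u. \<bar>u\<bar> \<le> U \<longrightarrow>
     (1 + norm v) ^ k * exp (Ps al u (v$i) ((norm v) ^ 2) / D) \<le> C * exp (- ((norm v) ^ 2))"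
proof -
  define cc where "cc = real k + U/D"
  define bb where "bb = (al-1)/(2 * D) + 1"
  define aa where "aa = al/(4 * D)"
  have aa: "aa > 0" using al D by (simp add: aa_def)
  define M where "M = cc ^ 2/4 + (bb+1) ^ 2/(4 * aa)"
  show ?thesis
  proof (intro exI[of _ "exp M"] conjI allI impI)
    fix v :: "real^'n" and u :: real assume u: "\<bar>u\<bar> \<le> U"
    define r where "r = norm v"
    have r0: "r \<ge> 0" by (simp add: r_def)
    have "\<bar>v$i\<bar> \<le> r" unfolding r_def by (rule component_le_norm_cart)
    then have "u * v$i \<le> U * r"
    proof -
      have "u * v$i \<le> \<bar>u\<bar> * \<bar>v$i\<bar>" by (metis abs_ge_self abs_mult)
      also have "\<dots> \<le> U * r" using u \<open>\<bar>v$i\<bar> \<le> r\<close> by (intro mult_mono) auto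
      finally show ?thesis .
    qed
    then have "Ps al u (v$i) (r ^ 2) \<le> - (r ^ 2)/2 + U * r - al * (r ^ 4/4 - r ^ 2/2)"
      by (simp add: Ps_def power_mult[symmetric])
    then have "Ps al u (v$i) (r ^ 2) / D \<le> (- (r ^ 2)/2 + U * r - al * (r ^ 4/4 - r ^ 2/2)) / D"
      using D by (simp add: divide_right_mono)
    also have "\<dots> = (U/D) * r + ((al-1)/(2 * D)) * r ^ 2 - aa * r ^ 4"
      using D by (simp add: aa_def field_simps)
    finally have ps: "Ps al u (v$i) (r ^ 2) / D \<le> (U/D) * r + ((al-1)/(2 * D)) * r ^ 2 - aa * r ^ 4" .
    have "(1 + r) ^ k \<le> (exp r) ^ k"
      using r0 by (intro power_mono) (auto simp: exp_ge_add_one_self add.commute)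
    also have "\<dots> = exp (real k * r)" by (simp add: exp_of_nat_mult)
    finally have pk: "(1 + r) ^ k \<le> exp (real k * r)" .
    have "(1 + r) ^ k * exp (Ps al u (v$i) (r ^ 2) / D) \<le> exp (real k * r) * exp (Ps al u (v$i) (r ^ 2) / D)"
      using pk by (intro mult_right_mono) auto
    also have "\<dots> = exp (real k * r + Ps al u (v$i) (r ^ 2) / D)" by (simp add: exp_add)
    also have "\<dots> \<le> exp (M - r ^ 2)"
    proof -
      have "real k * r + Ps al u (v$i) (r ^ 2) / D \<le> cc * r + bb * r ^ 2 - aa * r ^ 4 - r ^ 2"
        using ps by (simp add: cc_def bb_def algebra_simps)
      also have "\<dots> \<le> M - r ^ 2" using poly_bound[OF aa, of cc r bb] by (simp add: M_def)
      finally show ?thesis by simp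
    qed
    also have "\<dots> = exp M * exp (- (r ^ 2))" by (simp add: exp_diff exp_minus field_simps)
    finally show "(1 + norm v) ^ k * exp (Ps al u (v$i) ((norm v) ^ 2) / D) \<le> exp M * exp (- ((norm v) ^ 2))"
      by (simp add: r_def)
  qed simp
qed

lemma INT:
  fixes i :: "'n::finite" and f :: "real^'n \<Rightarrow> real"
  assumes al: "al > 0" and D: "D > 0" and fm: "f \<in> borel_measurable lborel"
    and fb: "\<And>v. \<bar>f v\<bar> \<le> K * (1 + norm v) ^ k * exp (Ps al u (v$i) ((norm v) ^ 2) / D)"
  shows "integrable lborel f"
proof -
  obtain C where C: "C > 0" "\<And>(v::real^'n) u'. \<bar>u'\<bar> \<le> \<bar>u\<bar> \<Longrightarrow>
     (1 + norm v) ^ k * exp (Ps al u' (v$i) ((norm v) ^ 2) / D) \<le> C * exp (- ((norm v) ^ 2))"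
    using MB[OF al D, of "\<bar>u\<bar>" k i] by auto
  show ?thesis
  proof (rule Bochner_Integration.integrable_bound[OF _ fm])
    show "integrable lborel (\<lambda>v::real^'n. \<bar>K\<bar> * C * exp (- ((norm v) ^ 2) / 2))"
      by (rule integrable_mult_right[OF gauss_int])
    show "AE v in lborel. norm (f v) \<le> norm (\<bar>K\<bar> * C * exp (- ((norm v) ^ 2) / 2))"
    proof (intro AE_I2)
      fix v :: "real^'n"
      have "\<bar>f v\<bar> \<le> K * ((1 + norm v) ^ k * exp (Ps al u (v$i) ((norm v) ^ 2) / D))"
        using fb[of v] by (simp add: mult.assoc)
      also have "\<dots> \<le> \<bar>K\<bar> * ((1 + norm v) ^ k * exp (Ps al u (v$i) ((norm v) ^ 2) / D))"
        by (intro mult_right_mono) auto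
      also have "\<dots> \<le> \<bar>K\<bar> * (C * exp (- ((norm v) ^ 2)))"
        by (intro mult_left_mono C(2)) auto
      also have "\<dots> \<le> \<bar>K\<bar> * (C * exp (- ((norm v) ^ 2) / 2))"
        using C by (intro mult_left_mono) auto
      finally show "norm (f v) \<le> norm (\<bar>K\<bar> * C * exp (- ((norm v) ^ 2) / 2))"
        using C by (simp add: mult.assoc)
    qed
  qed
qed

lemma der_u:
  assumes "D \<noteq> 0"
  shows "((\<lambda>s. (a - s) * exp (Ps al s a n2 / D)) has_real_derivative
     ((-1 + (a - t) * a / D) * exp (Ps al t a n2 / D))) (at t)"
  unfolding Ps_def
  apply (rule derivative_eq_intros refl assms | simp)+
  apply (simp add: field_simps)
  done
lemma der_s:
  assumes "D \<noteq> 0"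
  shows "((\<lambda>s. (a + s) * exp (Ps al u (a + s) (n2 + 2 * s * a + s ^ 2) / D)) has_real_derivative
     (exp (Ps al u (a + t) (n2 + 2 * t * a + t ^ 2) / D) *
       (1 + (a + t) * (u - (a + t) - al * (a + t) * ((n2 + 2 * t * a + t ^ 2) - 1)) / D))) (at t)"
  unfolding Ps_def
  apply (rule derivative_eq_intros refl assms | simp)+
  apply (simp add: field_simps power2_eq_square)
  done

lemma norm_shift:
  fixes v :: "real^'n"
  shows "(norm (v + s *\<^sub>R axis i 1)) ^ 2 = (norm v) ^ 2 + 2 * s * (v$i) + s ^ 2"
    and "(v + s *\<^sub>R axis i 1) $ i = v$i + s"
proof -
  show "(norm (v + s *\<^sub>R axis i 1)) ^ 2 = (norm v) ^ 2 + 2 * s * (v$i) + s ^ 2"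
    unfolding power2_norm_eq_inner
    by (simp add: inner_add_left inner_add_right inner_axis inner_axis' inner_axis_axis algebra_simps power2_eq_square)
  show "(v + s *\<^sub>R axis i 1) $ i = v$i + s" by simp
qed


lemma cont_meas: "continuous_on UNIV f \<Longrightarrow> f \<in> borel_measurable lborel"
  by (simp add: borel_measurable_continuous_onI)

lemma integrable_translate:
  fixes f :: "'a::euclidean_space \<Rightarrow> real"
  assumes "integrable lborel f"
  shows "integrable lborel (\<lambda>x. f (c + x))"
proof -
  have "integrable (distr lborel borel ((+) c)) f" using assms by (simp add: lborel_distr_plus)
  moreover have "f \<in> borel_measurable borel" using assms by auto
  ultimately show ?thesis by (subst (asm) integrable_distr_eq) auto
qed

lemma pw: "0 \<le> (r::real) \<Longrightarrow> j \<le> k \<Longrightarrow> r ^ j \<le> (1 + r) ^ k"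
proof -
  assume r: "0 \<le> r" and jk: "j \<le> k"
  have "r ^ j \<le> (1 + r) ^ j" using r by (intro power_mono) auto
  also have "\<dots> \<le> (1 + r) ^ k" using r jk by (intro power_increasing) auto
  finally show ?thesis .
qed

lemma lin_aux: fixes al W V D ua ub u p q r s :: real shows "p \<le> 64 * al \<Longrightarrow> 0 \<le> q \<Longrightarrow> 2 * al \<le> r \<Longrightarrow> s \<le> al/2 \<Longrightarrow>
  ub = ua + 3 * u \<Longrightarrow> 8 + 65 * al \<le> D \<Longrightarrow> 0 < u \<Longrightarrow> 4 \<le> W \<Longrightarrow> W \<le> 16 \<Longrightarrow> 0 \<le> V \<Longrightarrow> V < 1 \<Longrightarrow> 0 < al \<Longrightarrow>
  - V / 2 + ua - (q - s) - D \<le> - W / 2 + ub - (p - r)"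
  by linarith

lemma POS:
  fixes i :: "'n::finite"
  assumes al: "al > 0" and u: "u > 0" and D: "D \<ge> 8 + 65 * al"
  shows "(\<integral>v. ((v$i) ^ 2 * ((norm v) ^ 2 - 1) * exp (Ps al u (v$i) ((norm v) ^ 2) / D)) \<partial>(lborel::(real^'n) measure)) > 0"
proof -
  have D0: "D > 0" using al D by simp
  define \<rho> where "\<rho> v = exp (Ps al u (v$i) ((norm v) ^ 2) / D)" for v :: "real^'n"
  define f where "f v = (v$i) ^ 2 * ((norm v) ^ 2 - 1) * \<rho> v" for v :: "real^'n"
  define c :: "real^'n" where "c = 3 *\<^sub>R axis i 1"
  define B :: "(real^'n) set" where "B = ball 0 1"
  define S :: "(real^'n) set" where "S = ball c 1"
  have \<rho>pos: "\<rho> v > 0" for v by (simp add: \<rho>_def)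
  have \<rho>cont: "continuous_on UNIV \<rho>"
    unfolding \<rho>_def Ps_def by (intro continuous_intros) (use D0 in auto)
  have fcont: "continuous_on UNIV f"
    unfolding f_def by (intro continuous_intros \<rho>cont)
  have fm: "f \<in> borel_measurable lborel" by (rule cont_meas[OF fcont])
  have \<rho>m: "\<rho> \<in> borel_measurable lborel" by (rule cont_meas[OF \<rho>cont])
  have fint: "integrable lborel f"
  proof (rule INT[OF al D0 fm, where K=2 and k=4 and u=u and i=i])
    fix v :: "real^'n"
    define r where "r = norm v"
    have r0: "r \<ge> 0" by (simp add: r_def)
    have a: "\<bar>v$i\<bar> \<le> r" unfolding r_def by (rule component_le_norm_cart)
    have a2: "(v$i) ^ 2 \<le> r ^ 2" using a by (metis abs_le_square_iff power2_abs abs_of_nonneg r0)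
    have "\<bar>f v\<bar> = (v$i) ^ 2 * \<bar>r ^ 2 - 1\<bar> * \<rho> v"
      using \<rho>pos[of v] by (simp add: f_def r_def abs_mult)
    also have "\<dots> \<le> r ^ 2 * (r ^ 2 + 1) * \<rho> v"
      using \<rho>pos[of v] a2 zero_le_power2[of r] by (intro mult_right_mono mult_mono) (auto simp: less_imp_le abs_le_iff)
    also have "\<dots> = (r ^ 4 + r ^ 2) * \<rho> v" by (simp add: algebra_simps power_add[symmetric])
    also have "\<dots> \<le> (2 * (1 + r) ^ 4) * \<rho> v"
      using pw[OF r0, of 4 4] pw[OF r0, of 2 4] \<rho>pos[of v] by (intro mult_right_mono) auto
    finally show "\<bar>f v\<bar> \<le> 2 * (1 + norm v) ^ 4 * exp (Ps al u (v $ i) ((norm v)\<^sup>2) / D)"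
      by (simp add: r_def \<rho>_def)
  qed
  have Bs: "B \<in> sets lborel" "S \<in> sets lborel" by (auto simp: B_def S_def)
  have i1: "integrable lborel (\<lambda>v. f v * indicator B v)"
    by (rule integrable_real_mult_indicator[OF Bs(1) fint])
  have i2: "integrable lborel (\<lambda>v. f v * indicator S v)"
    by (rule integrable_real_mult_indicator[OF Bs(2) fint])
  have i3: "integrable lborel (\<lambda>v. f v * (1 - indicator B v))"
    using fint i1 by (simp add: right_diff_distrib)
  have i4: "integrable lborel (\<lambda>v. f (c + v) * indicator B v)"
    using integrable_translate[OF i2, of c]
    by (rule back_subst[where P="integrable lborel"]) (auto simp: fun_eq_iff S_def B_def indicator_def dist_norm)
  have i5: "integrable lborel (\<lambda>v. \<rho> v * indicator B v)"
    proof (rule integrable_real_mult_indicator[OF Bs(1)])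
      show "integrable lborel \<rho>"
        by (rule INT[OF al D0 \<rho>m, where K=1 and k=0 and u=u and i=i]) (simp add: \<rho>_def)
    qed
  have outside: "f v * (1 - indicator B v) \<ge> f v * indicator S v" for v
  proof -
    have fnn: "f v \<ge> 0" if "norm v \<ge> 1"
    proof -
      have "(norm v)^2 \<ge> 1" using that by (metis one_le_power)
      then show ?thesis unfolding f_def using \<rho>pos[of v] by (intro mult_nonneg_nonneg) auto
    qed
    show ?thesis
    proof (cases "v \<in> S")
      case True
      have "\<bar>v$i - 3\<bar> \<le> norm (v - c)" using component_le_norm_cart[of "v - c" i] by (simp add: c_def)
      also have "\<dots> < 1" using True by (simp add: S_def dist_norm norm_minus_commute)
      finally have "v$i > 2" by simp
      then have "norm v \<ge> 1" using component_le_norm_cart[of v i] by simp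
      then show ?thesis using True fnn by (simp add: B_def)
    next
      case False
      then show ?thesis using fnn by (cases "v \<in> B") (auto simp: B_def)
    qed
  qed
  have inside: "(f v + f (c + v)) * indicator B v \<ge> \<rho> v * indicator B v" for v
  proof (cases "v \<in> B")
    case False then show ?thesis by simp
  next
    case True
    define V where "V = (norm v)^2"
    define w where "w = c + v"
    define W where "W = (norm w)^2"
    have nv: "norm v < 1" using True by (simp add: B_def)
    have V0: "V \<ge> 0" "V < 1" using nv by (auto simp: V_def power_less_one_iff abs_less_iff)
    have vi: "\<bar>v$i\<bar> < 1" using component_le_norm_cart[of v i] nv by simp
    have vi2: "(v$i)^2 \<le> 1" using abs_le_square_iff[of "v$i" 1] vi by simp
    have wi: "w$i = 3 + v$i" by (simp add: w_def c_def)
    have "norm w \<le> norm c + norm v" unfolding w_def by (rule norm_triangle_ineq)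
    then have nw: "norm w \<le> 4" using nv by (simp add: c_def)
    have nw2: "norm w \<ge> 2" using component_le_norm_cart[of w i] wi vi by simp
    have W: "W \<ge> 4" "W \<le> 16" unfolding W_def
      using nw nw2 power_mono[of 2 "norm w" 2] power_mono[of "norm w" 4 2] by auto
    have wi2: "(w$i)^2 \<ge> 4" using wi vi power_mono[of 2 "w$i" 2] by auto
    have fv: "f v \<ge> - \<rho> v"
    proof -
      have "(v$i)^2 * (V - 1) \<ge> (v$i)^2 * (-1)" by (intro mult_left_mono) (use V0 in auto)
      then have h: "(v$i)^2 * (V - 1) \<ge> -1" using vi2 by simp
      have "(-1) * \<rho> v \<le> (v$i)^2 * (V - 1) * \<rho> v"
        by (rule mult_right_mono[OF h]) (use \<rho>pos[of v] in auto)
      then show ?thesis unfolding f_def V_def by simp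
    qed
    have Pdiff: "Ps al u (w$i) W \<ge> Ps al u (v$i) V - D"
    proof -
      have "W^2 \<le> 256" using W power_mono[of W 16 2] by auto
      then have h1: "al * (W^2/4) \<le> 64 * al" using al by (simp add: mult_left_mono)
      have h2: "al * (V^2/4) \<ge> 0" using al by simp
      have h3: "al * (W/2) \<ge> 2 * al" using W al by (simp add: mult_left_mono)
      have h4: "al * (V/2) \<le> al / 2" using V0 al by (simp add: mult_left_mono)
      have h5: "u * w$i = u * v$i + 3 * u" by (simp add: wi algebra_simps)
      show ?thesis unfolding Ps_def right_diff_distrib by (rule lin_aux[OF h1 h2 h3 h4 h5 D u W V0 al])
    qed
    have "\<rho> w \<ge> \<rho> v * exp (-1)"
    proof -
      have "Ps al u (w$i) W / D \<ge> Ps al u (v$i) V / D - 1"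
      proof -
        have "(Ps al u (v$i) V - D) / D \<le> Ps al u (w$i) W / D"
          using Pdiff D0 by (intro divide_right_mono) auto
        then show ?thesis using D0 by (simp add: diff_divide_distrib)
      qed
      then have "exp (Ps al u (w$i) W / D) \<ge> exp (Ps al u (v$i) V / D - 1)" by simp
      then show ?thesis by (simp add: \<rho>_def W_def V_def exp_diff exp_minus field_simps)
    qed
    moreover have "exp (-1::real) \<ge> 1/3" using exp_le by (simp add: exp_minus field_simps)
    ultimately have \<rho>w: "\<rho> w \<ge> \<rho> v / 3"
    proof -
      have "\<rho> v * (1/3) \<le> \<rho> v * exp (-1)"
        by (rule mult_left_mono) (use \<open>exp (-1::real) \<ge> 1/3\<close> \<rho>pos[of v] in auto)
      then show ?thesis using \<open>\<rho> w \<ge> \<rho> v * exp (-1)\<close> by simp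
    qed
    have "(w$i)^2 * (W - 1) \<ge> 12"
    proof -
      have "(w$i)^2 * (W - 1) \<ge> 4 * 3" using wi2 W by (intro mult_mono) auto
      then show ?thesis by simp
    qed
    then have "f w \<ge> 12 * (\<rho> v / 3)"
      unfolding f_def W_def[symmetric] using \<rho>w \<rho>pos[of v] by (intro mult_mono) auto
    then have "f v + f (c + v) \<ge> \<rho> v" using fv \<rho>pos[of v] by (simp add: w_def)
    then show ?thesis using True by simp
  qed
  have ppos: "(\<integral>v. \<rho> v * indicator B v \<partial>lborel) > 0"
  proof (rule ccontr)
    assume "\<not> ?thesis"
    moreover have "(\<integral>v. \<rho> v * indicator B v \<partial>lborel) \<ge> 0"
      using \<rho>pos by (intro integral_nonneg_AE AE_I2) (auto simp: less_imp_le)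
    ultimately have "(\<integral>v. \<rho> v * indicator B v \<partial>lborel) = 0" by simp
    moreover have nn: "AE v in lborel. 0 \<le> \<rho> v * indicator B v"
      using \<rho>pos by (intro AE_I2) (simp add: less_imp_le)
    ultimately have "AE v in lborel. \<rho> v * indicator B v = 0"
      using integral_nonneg_eq_0_iff_AE[OF i5 nn] by simp
    then have "AE v in lborel. v \<notin> B"
    proof (rule AE_mp, intro AE_I2 impI)
      fix v assume "\<rho> v * indicator B v = 0"
      then show "v \<notin> B" using \<rho>pos[of v] by (auto simp: indicator_def split: if_splits)
    qed
    then have "emeasure lborel B = 0"
      by (subst (asm) AE_iff_measurable[OF Bs(1)]) auto
    moreover have "measure lborel B > 0" unfolding B_def by (rule content_ball_pos) simp
    ultimately show False by (simp add: measure_def)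
  qed
  have "(\<integral>v. f v \<partial>lborel) = (\<integral>v. f v * indicator B v \<partial>lborel) + (\<integral>v. f v * (1 - indicator B v) \<partial>lborel)"
    by (subst Bochner_Integration.integral_add[OF i1 i3, symmetric]) (simp add: algebra_simps)
  also have "(\<integral>v. f v * (1 - indicator B v) \<partial>lborel) \<ge> (\<integral>v. f v * indicator S v \<partial>lborel)"
    by (intro Bochner_Integration.integral_mono i2 i3 outside)
  moreover have "(\<integral>v. f v * indicator S v \<partial>lborel) = (\<integral>v. f (c + v) * indicator B v \<partial>lborel)"
  proof -
    have "(\<integral>v. f v * indicator S v \<partial>lborel) = (\<integral>v. f (c + v) * indicator S (c + v) \<partial>lborel)"
      by (rule integral_translate[symmetric]) (use fm Bs in auto)
    also have "\<dots> = (\<integral>v. f (c + v) * indicator B v \<partial>lborel)"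
      by (auto simp: S_def B_def indicator_def dist_norm intro!: Bochner_Integration.integral_cong)
    finally show ?thesis .
  qed
  ultimately have "(\<integral>v. f v \<partial>lborel) \<ge> (\<integral>v. f v * indicator B v \<partial>lborel) + (\<integral>v. f (c + v) * indicator B v \<partial>lborel)"
    by simp
  also have "(\<integral>v. f v * indicator B v \<partial>lborel) + (\<integral>v. f (c + v) * indicator B v \<partial>lborel)
      = (\<integral>v. (f v + f (c + v)) * indicator B v \<partial>lborel)"
    by (subst Bochner_Integration.integral_add[OF i1 i4, symmetric]) (simp add: algebra_simps)
  also have "\<dots> \<ge> (\<integral>v. \<rho> v * indicator B v \<partial>lborel)"
    using i1 i4 by (intro Bochner_Integration.integral_mono i5 inside) (auto intro: integrable_add simp: distrib_right)
  finally have "(\<integral>v. f v \<partial>lborel) > 0" using ppos by linarith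
  then show ?thesis by (simp add: f_def \<rho>_def)
qed

lemma abs_cdiv: "D > 0 \<Longrightarrow> \<bar>c + X / D\<bar> \<le> \<bar>c\<bar> + \<bar>X\<bar> / (D::real)"
  using abs_triangle_ineq[of c "X / D"] by (simp add: abs_divide)

lemma bnd_u_aux:
  fixes D t U a r p :: real
  assumes D: "D > 0" and t: "\<bar>t\<bar> \<le> U" and a: "\<bar>a\<bar> \<le> r" and p: "0 \<le> p"
  shows "\<bar>(-1 + (a - t) * a / D) * p\<bar> \<le> (1 + (1 + U) / D) * (1 + r) ^ 2 * p"
proof -
  have r0: "r \<ge> 0" using a by linarith
  have U0: "U \<ge> 0" using t by linarith
  have "\<bar>a - t\<bar> \<le> r + U" using a t by linarith
  then have h1: "\<bar>(a - t) * a\<bar> \<le> (r + U) * r" unfolding abs_mult using a r0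
    by (intro mult_mono) auto
  have h2: "(r + U) * r \<le> (1 + U) * (1 + r) ^ 2"
  proof -
    have "r ^ 2 \<le> (1 + r) ^ 2" "r ^ 1 \<le> (1 + r) ^ 2" using pw[OF r0, of 2 2] pw[OF r0, of 1 2] by auto
    then have "U * r \<le> U * (1 + r) ^ 2" using U0 by (intro mult_left_mono) auto
    then show ?thesis using \<open>r ^ 2 \<le> (1 + r) ^ 2\<close> by (simp add: algebra_simps power2_eq_square)
  qed
  have "\<bar>-1 + (a - t) * a / D\<bar> \<le> 1 + \<bar>(a - t) * a\<bar> / D" using abs_cdiv[OF D, of "-1" "(a - t) * a"] by simp
  also have "\<dots> \<le> 1 + (1 + U) * (1 + r) ^ 2 / D" using h1 h2 D by (simp add: divide_right_mono)
  also have "\<dots> \<le> (1 + (1 + U) / D) * (1 + r) ^ 2"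
    using pw[OF r0, of 0 2] by (simp add: algebra_simps)
  finally show ?thesis using p by (simp add: abs_mult mult_right_mono)
qed

lemma bnd_s_aux:
  fixes D al u b R p :: real
  assumes D: "D > 0" and al: "al > 0" and u: "u \<ge> 0" and b: "\<bar>b\<bar> \<le> R" and p: "0 \<le> p"
  shows "\<bar>p * (1 + b * (u - b - al * b * (R ^ 2 - 1)) / D)\<bar> \<le> (1 + (u + 1 + 2 * al) / D) * (1 + R) ^ 4 * p"
proof -
  have R0: "R \<ge> 0" using b by linarith
  have b2: "b ^ 2 \<le> R ^ 2" using b R0 by (metis abs_le_square_iff abs_of_nonneg)
  have e1: "\<bar>b * u\<bar> \<le> R * u" using b u by (simp add: abs_mult mult_right_mono)
  have e2: "\<bar>al * b ^ 2 * (R ^ 2 - 1)\<bar> \<le> al * R ^ 2 * (R ^ 2 + 1)"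
    using b2 al zero_le_power2[of R] by (simp add: abs_mult) (intro mult_mono, auto simp: abs_le_iff)
  have "\<bar>b * (u - b - al * b * (R ^ 2 - 1))\<bar> = \<bar>b * u - b ^ 2 - al * b ^ 2 * (R ^ 2 - 1)\<bar>"
    by (simp add: algebra_simps power2_eq_square)
  also have "\<dots> \<le> \<bar>b * u\<bar> + b ^ 2 + \<bar>al * b ^ 2 * (R ^ 2 - 1)\<bar>" 
    using abs_ge_self[of "b * u"] abs_ge_minus_self[of "b * u"] abs_ge_self[of "al * b ^ 2 * (R ^ 2 - 1)"]
      abs_ge_minus_self[of "al * b ^ 2 * (R ^ 2 - 1)"] zero_le_power2[of b]
    unfolding abs_le_iff by linarith
  also have "\<dots> \<le> R * u + R ^ 2 + al * R ^ 2 * (R ^ 2 + 1)" using e1 e2 b2 by linarith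
  also have "\<dots> = u * R ^ 1 + R ^ 2 + al * R ^ 4 + al * R ^ 2" by (simp add: algebra_simps power2_eq_square power4_eq_xxxx)
  also have "\<dots> \<le> u * (1 + R) ^ 4 + (1 + R) ^ 4 + al * (1 + R) ^ 4 + al * (1 + R) ^ 4"
    using pw[OF R0, of 1 4] pw[OF R0, of 2 4] pw[OF R0, of 4 4] u al
    by (intro add_mono mult_left_mono) auto
  finally have X: "\<bar>b * (u - b - al * b * (R ^ 2 - 1))\<bar> \<le> (u + 1 + 2 * al) * (1 + R) ^ 4"
    by (simp add: algebra_simps)
  have "\<bar>1 + b * (u - b - al * b * (R ^ 2 - 1)) / D\<bar> \<le> 1 + \<bar>b * (u - b - al * b * (R ^ 2 - 1))\<bar> / D"
    using abs_cdiv[OF D, of 1] by simp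
  also have "\<dots> \<le> 1 + (u + 1 + 2 * al) * (1 + R) ^ 4 / D" using X D by (simp add: divide_right_mono)
  also have "\<dots> \<le> (1 + (u + 1 + 2 * al) / D) * (1 + R) ^ 4"
    using pw[OF R0, of 0 4] by (simp add: algebra_simps)
  finally show ?thesis using p by (simp add: abs_mult mult_left_mono mult.commute)
qed


lemma gauss_int2: "integrable (lborel::('a::euclidean_space) measure) (\<lambda>v. exp (- ((norm v) ^ 2)))"
proof (rule Bochner_Integration.integrable_bound[OF gauss_int])
  show "(\<lambda>v::'a. exp (- ((norm v) ^ 2))) \<in> borel_measurable lborel"
    by (intro cont_meas continuous_intros)
  show "AE v in lborel. norm (exp (- ((norm (v::'a)) ^ 2))) \<le> norm (exp (- (norm v)\<^sup>2 / 2))"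
    by (intro AE_I2) simp
qed




theorem lemma2p3:
  fixes \<alpha> :: real and i :: "'n::finite"
  assumes "\<alpha> > 0"
  shows "\<exists>D0>0. \<forall>u>0. \<forall>D\<ge>D0. \<exists>H'.
           ((\<lambda>w. Htilde \<alpha> i w D) has_real_derivative H') (at u) \<and> H' < 0"
proof (rule exI[of _ "8 + 65 * \<alpha>"], intro conjI allI impI)
  show "8 + 65 * \<alpha> > 0" using assms by simp
  fix u D :: real assume u: "u > 0" and D: "D \<ge> 8 + 65 * \<alpha>"
  have D0: "D > 0" using D assms by simp
  define \<rho> where "\<rho> w v = exp (Ps \<alpha> w (v$i) ((norm v) ^ 2) / D)" for w and v :: "real^'n"
  have \<rho>pos: "\<rho> w v > 0" for w v by (simp add: \<rho>_def)
  have \<rho>cont: "continuous_on UNIV (\<rho> w)" for w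
    unfolding \<rho>_def Ps_def by (intro continuous_intros) (use D0 in auto)
  define F where "F w v = (v$i - w) * \<rho> w v" for w and v :: "real^'n"
  define F' where "F' w v = (-1 + (v$i - w) * (v$i) / D) * \<rho> w v" for w and v :: "real^'n"
  have Hdef: "Htilde \<alpha> i w D = (\<integral>v. F w v \<partial>lborel)" for w
    unfolding Htilde_def
  proof (intro Bochner_Integration.integral_cong refl)
    fix v :: "real^'n"
    have e: "- (norm v ^ 2) / (2 * D) + w * v $ i / D + (- \<alpha> * (norm v ^ 4 / (4 * D) - norm v ^ 2 / (2 * D)))
        = Ps \<alpha> w (v$i) ((norm v) ^ 2) / D"
      using D0 by (simp add: Ps_def field_simps power_mult[symmetric])
    show "(v $ i - w) * exp (- (norm v ^ 2) / (2 * D) + w * v $ i / D) *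
          exp (- \<alpha> * (norm v ^ 4 / (4 * D) - norm v ^ 2 / (2 * D))) = F w v"
      unfolding F_def \<rho>_def mult.assoc exp_add[symmetric] e ..
  qed
  obtain C1 where C1: "C1 > 0" "\<And>(v::real^'n) t. \<bar>t\<bar> \<le> u + 1 \<Longrightarrow>
     (1 + norm v) ^ 2 * exp (Ps \<alpha> t (v$i) ((norm v) ^ 2) / D) \<le> C1 * exp (- ((norm v) ^ 2))"
    using MB[OF assms D0, of "u + 1" 2 i] u by auto
  define K1 where "K1 = 1 + (1 + (u + 1)) / D"
  have K1: "K1 \<ge> 0" using D0 u by (simp add: K1_def)
  define g1 where "g1 v = K1 * C1 * exp (- ((norm v) ^ 2))" for v :: "real^'n"
  have g1i: "integrable lborel g1" unfolding g1_def by (rule integrable_mult_right[OF gauss_int2])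
  have bnd1: "\<bar>F' t v\<bar> \<le> g1 v" if "\<bar>t - u\<bar> < 1" for t v
  proof -
    have t: "\<bar>t\<bar> \<le> u + 1" using that u by linarith
    have "\<bar>F' t v\<bar> \<le> K1 * (1 + norm v) ^ 2 * \<rho> t v"
      unfolding F'_def K1_def
      by (rule bnd_u_aux[OF D0 t component_le_norm_cart less_imp_le[OF \<rho>pos]])
    also have "\<dots> = K1 * ((1 + norm v) ^ 2 * \<rho> t v)" by simp
    also have "\<dots> \<le> K1 * (C1 * exp (- ((norm v) ^ 2)))"
      by (intro mult_left_mono K1) (use C1(2)[OF t, of v] in \<open>simp add: \<rho>_def\<close>)
    finally show ?thesis by (simp add: g1_def mult.assoc)
  qed
  have Fcont: "continuous_on UNIV (F t)" for t
    unfolding F_def by (intro continuous_intros \<rho>cont)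
  have F'cont: "continuous_on UNIV (F' t)" for t
    unfolding F'_def by (intro continuous_intros \<rho>cont) (use D0 in auto)
  have Fi: "integrable lborel (F u)"
  proof (rule INT[OF assms D0 cont_meas[OF Fcont], where K="1 + u" and k=1 and u=u and i=i])
    fix v :: "real^'n"
    have "\<bar>v$i - u\<bar> \<le> norm v + u" using component_le_norm_cart[of v i] u by linarith
    also have "\<dots> \<le> (1 + u) * (1 + norm v)" using u by (simp add: algebra_simps)
    finally have "\<bar>v$i - u\<bar> * \<rho> u v \<le> (1 + u) * (1 + norm v) * \<rho> u v"
      using \<rho>pos[of u v] by (intro mult_right_mono) auto
    then show "\<bar>F u v\<bar> \<le> (1 + u) * (1 + norm v) ^ 1 * exp (Ps \<alpha> u (v $ i) ((norm v)\<^sup>2) / D)"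
      using \<rho>pos[of u v] by (simp add: F_def \<rho>_def abs_mult)
  qed
  have Hd: "((\<lambda>w. \<integral>v. F w v \<partial>lborel) has_real_derivative (\<integral>v. F' u v \<partial>lborel)) (at u)"
  proof (rule deriv_integral[where r=1 and g=g1])
    show "F t \<in> borel_measurable lborel" for t by (rule cont_meas[OF Fcont])
    show "F' u \<in> borel_measurable lborel" by (rule cont_meas[OF F'cont])
    show "((\<lambda>s. F s v) has_real_derivative F' t v) (at t)" for t v
      unfolding F_def F'_def \<rho>_def by (rule der_u) (use D0 in simp)
  qed (use Fi g1i bnd1 in auto)
  have F'i: "integrable lborel (F' u)"
    by (rule Bochner_Integration.integrable_bound[OF g1i cont_meas[OF F'cont]])
       (use bnd1[of u] in \<open>auto intro!: AE_I2 intro: order_trans[OF _ abs_ge_self]\<close>)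
  \<comment> \<open>integration by parts in direction i\<close>
  define e :: "real^'n" where "e = axis i 1"
  define G where "G v = v$i * \<rho> u v" for v :: "real^'n"
  define Gi where "Gi v = \<rho> u v * (1 + v$i * (u - v$i - \<alpha> * v$i * ((norm v) ^ 2 - 1)) / D)" for v :: "real^'n"
  obtain C2 where C2: "C2 > 0" "\<And>(v::real^'n) t. \<bar>t\<bar> \<le> u \<Longrightarrow>
     (1 + norm v) ^ 4 * exp (Ps \<alpha> t (v$i) ((norm v) ^ 2) / D) \<le> C2 * exp (- ((norm v) ^ 2))"
    using MB[OF assms D0, of u 4 i] u by auto
  define K2 where "K2 = 1 + (u + 1 + 2 * \<alpha>) / D"
  have K2: "K2 \<ge> 0" using D0 u assms by (simp add: K2_def)
  define g2 where "g2 v = K2 * C2 * exp 1 * exp (- ((norm v) ^ 2) / 2)" for v :: "real^'n"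
  have g2i: "integrable lborel g2" unfolding g2_def by (rule integrable_mult_right[OF gauss_int])
  have Gib: "\<bar>Gi w\<bar> \<le> K2 * C2 * exp (- ((norm w) ^ 2))" for w
  proof -
    have "\<bar>Gi w\<bar> \<le> K2 * (1 + norm w) ^ 4 * \<rho> u w"
      unfolding Gi_def K2_def
      by (rule bnd_s_aux[OF D0 assms less_imp_le[OF u] component_le_norm_cart less_imp_le[OF \<rho>pos]])
    also have "\<dots> = K2 * ((1 + norm w) ^ 4 * \<rho> u w)" by simp
    also have "\<dots> \<le> K2 * (C2 * exp (- ((norm w) ^ 2)))"
      by (intro mult_left_mono K2) (use C2(2)[of u w] u in \<open>simp add: \<rho>_def\<close>)
    finally show ?thesis by (simp add: mult.assoc)
  qed
  have shiftb: "exp (- ((norm (v + t *\<^sub>R e)) ^ 2)) \<le> exp 1 * exp (- ((norm v) ^ 2) / 2)"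
    if "\<bar>t\<bar> < 1" for v t
  proof -
    have "norm v \<le> norm (v + t *\<^sub>R e) + norm (t *\<^sub>R e)"
      using norm_triangle_ineq4[of "v + t *\<^sub>R e" "t *\<^sub>R e"] by simp
    also have "\<dots> \<le> norm (v + t *\<^sub>R e) + 1" using that by (simp add: e_def)
    finally have h: "norm v \<le> norm (v + t *\<^sub>R e) + 1" .
    have "(norm v) ^ 2 \<le> (norm (v + t *\<^sub>R e) + 1) ^ 2" using h by (intro power_mono) auto
    also have "\<dots> \<le> 2 * (norm (v + t *\<^sub>R e)) ^ 2 + 2"
      using zero_le_power2[of "norm (v + t *\<^sub>R e) - 1"] by (simp add: power2_eq_square algebra_simps)
    finally have "- ((norm (v + t *\<^sub>R e)) ^ 2) \<le> 1 + (- ((norm v) ^ 2) / 2)" by simp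
    then have "exp (- ((norm (v + t *\<^sub>R e)) ^ 2)) \<le> exp (1 + (- ((norm v) ^ 2) / 2))"
      by (simp only: exp_le_cancel_iff)
    also have "\<dots> = exp 1 * exp (- ((norm v) ^ 2) / 2)" by (rule exp_add)
    finally show ?thesis .
  qed
  have bnd2: "\<bar>Gi (v + t *\<^sub>R e)\<bar> \<le> g2 v" if "\<bar>t - 0\<bar> < 1" for t v
  proof -
    have "\<bar>Gi (v + t *\<^sub>R e)\<bar> \<le> K2 * C2 * exp (- ((norm (v + t *\<^sub>R e)) ^ 2))" by (rule Gib)
    also have "\<dots> \<le> K2 * C2 * (exp 1 * exp (- ((norm v) ^ 2) / 2))"
      using shiftb[of t v] that K2 C2 by (intro mult_left_mono) auto
    finally show ?thesis by (simp add: g2_def mult.assoc)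
  qed
  have Gcont: "continuous_on UNIV (\<lambda>v. G (v + t *\<^sub>R e))" for t
    unfolding G_def \<rho>_def Ps_def by (intro continuous_intros) (use D0 in auto)
  have Gicont: "continuous_on UNIV (\<lambda>v. Gi (v + t *\<^sub>R e))" for t
    unfolding Gi_def \<rho>_def Ps_def by (intro continuous_intros) (use D0 in auto)
  have Gi0: "integrable lborel G"
  proof (rule INT[OF assms D0, where K=1 and k=1 and u=u and i=i])
    show "G \<in> borel_measurable lborel" using cont_meas[OF Gcont[of 0]] by simp
    fix v :: "real^'n"
    have "\<bar>v$i\<bar> \<le> 1 * (1 + norm v) ^ 1" using component_le_norm_cart[of v i] by simp
    then have "\<bar>v$i\<bar> * \<rho> u v \<le> 1 * (1 + norm v) ^ 1 * \<rho> u v"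
      using \<rho>pos[of u v] by (intro mult_right_mono) auto
    then show "\<bar>G v\<bar> \<le> 1 * (1 + norm v) ^ 1 * exp (Ps \<alpha> u (v $ i) ((norm v)\<^sup>2) / D)"
      using \<rho>pos[of u v] by (simp add: G_def \<rho>_def abs_mult)
  qed
  have Phid: "((\<lambda>t. \<integral>v. G (v + t *\<^sub>R e) \<partial>lborel) has_real_derivative
      (\<integral>v. Gi (v + 0 *\<^sub>R e) \<partial>lborel)) (at 0)"
  proof (rule deriv_integral[where r=1 and g=g2])
    show "(\<lambda>v. G (v + t *\<^sub>R e)) \<in> borel_measurable lborel" for t by (rule cont_meas[OF Gcont])
    show "(\<lambda>v. Gi (v + 0 *\<^sub>R e)) \<in> borel_measurable lborel" by (rule cont_meas[OF Gicont])
    show "integrable lborel (\<lambda>v. G (v + 0 *\<^sub>R e))" using Gi0 by simp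
    show "((\<lambda>s. G (v + s *\<^sub>R e)) has_real_derivative Gi (v + t *\<^sub>R e)) (at t)" for t v
    proof -
      have eqF: "(\<lambda>s. G (v + s *\<^sub>R e)) = (\<lambda>s. (v$i + s) *
          exp (Ps \<alpha> u (v$i + s) ((norm v) ^ 2 + 2 * s * (v$i) + s ^ 2) / D))"
        by (simp add: G_def \<rho>_def e_def norm_shift)
      have eqF': "Gi (v + t *\<^sub>R e) = exp (Ps \<alpha> u (v$i + t) ((norm v) ^ 2 + 2 * t * (v$i) + t ^ 2) / D) *
          (1 + (v$i + t) * (u - (v$i + t) - \<alpha> * (v$i + t) * (((norm v) ^ 2 + 2 * t * (v$i) + t ^ 2) - 1)) / D)"
        by (simp add: Gi_def \<rho>_def e_def norm_shift)
      show ?thesis unfolding eqF eqF' by (rule der_s) (use D0 in simp)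
    qed
  qed (use g2i bnd2 in auto)
  have Phic: "(\<lambda>t. \<integral>v. G (v + t *\<^sub>R e) \<partial>lborel) = (\<lambda>t. \<integral>v. G v \<partial>lborel)"
  proof
    fix t
    have "(\<integral>v. G (t *\<^sub>R e + v) \<partial>lborel) = (\<integral>v. G v \<partial>lborel)"
      by (rule integral_translate) (use cont_meas[OF Gcont[of 0]] in simp)
    then show "(\<integral>v. G (v + t *\<^sub>R e) \<partial>lborel) = (\<integral>v. G v \<partial>lborel)" by (simp add: add.commute)
  qed
  have GiI: "(\<integral>v. Gi v \<partial>lborel) = 0"
  proof -
    have h1: "((\<lambda>t. \<integral>v. G v \<partial>lborel) has_real_derivative 0) (at 0)" by simp
    have h2: "((\<lambda>t. \<integral>v. G v \<partial>lborel) has_real_derivative (\<integral>v. Gi (v + 0 *\<^sub>R e) \<partial>lborel)) (at 0)"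
      using Phid unfolding Phic .
    have "0 = (\<integral>v. Gi (v + 0 *\<^sub>R e) \<partial>lborel)" by (rule DERIV_unique[OF h1 h2])
    then show ?thesis by simp
  qed
  have Gii: "integrable lborel Gi"
    by (rule Bochner_Integration.integrable_bound[OF g2i])
       (use cont_meas[OF Gicont[of 0]] bnd2[of 0] in \<open>auto intro!: AE_I2 intro: order_trans[OF _ abs_ge_self]\<close>)
  define f where "f v = (v$i) ^ 2 * ((norm v) ^ 2 - 1) * exp (Ps \<alpha> u (v$i) ((norm v) ^ 2) / D)" for v :: "real^'n"
  have pt: "F' u v + Gi v = - (\<alpha> / D) * f v" for v
    using D0 by (simp add: F'_def Gi_def f_def \<rho>_def field_simps power2_eq_square)
  have "(\<integral>v. F' u v \<partial>lborel) = (\<integral>v. F' u v + Gi v \<partial>lborel) - (\<integral>v. Gi v \<partial>lborel)"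
    using F'i Gii by simp
  also have "\<dots> = - (\<alpha> / D) * (\<integral>v. f v \<partial>lborel)" unfolding pt GiI by simp
  finally have HI: "(\<integral>v. F' u v \<partial>lborel) = - (\<alpha> / D) * (\<integral>v. f v \<partial>lborel)" .
  have "(\<integral>v. f v \<partial>lborel) > 0" unfolding f_def by (rule POS[OF assms u D])
  then have neg: "(\<integral>v. F' u v \<partial>lborel) < 0" unfolding HI using assms D0
    by (simp add: mult_neg_pos)
  show "\<exists>H'. ((\<lambda>w. Htilde \<alpha> i w D) has_real_derivative H') (at u) \<and> H' < 0"
    using Hd neg unfolding Hdef by blast
qed


end
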